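(* Let $L$ be a finite field of characteristic $p$ and cardinality $q>2$, and let $f\colon L\to L$, $f(x)=x^s$, be a power permutation of $L$ (i.e. $\gcd(s,q-1)=1$) with exponent $s\equiv 1\pmod{p-1}$. Let $\ell$ be a prime. If the degree $[L:\mathbb{F}_p]$ is a power of $\ell$ and $p\not\equiv 2\pmod \ell$, then $\mathfrak{D}(f)\equiv 0\pmod \ell$.
   Context: Let $\mu$ be the canonical additive character of $L$, $\mu(x)=\exp(2i\pi\,\mathrm{Tr}(x)/p)$, where $\mathrm{Tr}$ is the trace of $L/\mathbb{F}_p$. The Fourier coefficient of $f$ at $a\in L$ is $\widehat{f}(a)=\sum_{x\in L}\mu(ax+f(x))$; under the hypothesis $s\equiv 1\pmod{p-1}$ these are rational integers. Define $\mathfrak{D}(f)=\prod_{a\in L^{\times}}\widehat{f}(a)$. *)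

theory Defs
  imports "HOL-Analysis.Analysis" "HOL-Computational_Algebra.Primes" "HOL-Number_Theory.Cong"
begin

definition field_degree :: "'a::finite_field itself \<Rightarrow> nat" where
  "field_degree _ = (THE n. CARD('a) = CHAR('a) ^ n)"

definition abs_trace :: "'a::finite_field \<Rightarrow> 'a" where
  "abs_trace x = (\<Sum>i < field_degree TYPE('a). x ^ (CHAR('a) ^ i))"

definition trace_nat :: "'a::finite_field \<Rightarrow> nat" where
  "trace_nat x = (THE k. k < CHAR('a) \<and> of_nat k = abs_trace x)"

definition can_char :: "'a::finite_field \<Rightarrow> complex" where
  "can_char x = exp (2 * of_real pi * \<i> * of_nat (trace_nat x) / of_nat CHAR('a))"

definition fourier_coeff :: "('a::finite_field \<Rightarrow> 'a) \<Rightarrow> 'a \<Rightarrow> complex" where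
  "fourier_coeff f a = (\<Sum>x\<in>UNIV. can_char (a * x + f x))"

definition frakD :: "('a::finite_field \<Rightarrow> 'a) \<Rightarrow> complex" where
  "frakD f = (\<Prod>a\<in>UNIV - {0}. fourier_coeff f a)"

end

theory Submission
  imports Defs "HOL-Computational_Algebra.Polynomial" "HOL-Number_Theory.Cong"
begin

lemma frob_add: "((x::'a::finite_field) + y) ^ CHAR('a) = x ^ CHAR('a) + y ^ CHAR('a)"
  by (rule freshmans_dream) auto

lemma frob_add': "((x::'a::finite_field) + y) ^ (CHAR('a)^i) = x ^ (CHAR('a)^i) + y ^ (CHAR('a)^i)"
  by (rule freshmans_dream') auto

lemma frob_diff: "((x::'a::finite_field) - y) ^ CHAR('a) = x ^ CHAR('a) - y ^ CHAR('a)"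
proof -
  have "x ^ CHAR('a) = ((x - y) + y) ^ CHAR('a)" by simp
  also have "\<dots> = (x-y) ^ CHAR('a) + y ^ CHAR('a)" by (rule frob_add)
  finally show ?thesis by (simp add: algebra_simps)
qed

definition Kset :: "'a::finite_field set" where
  "Kset = {c. c ^ CHAR('a) = c}"

lemma K_of_nat: "(of_nat j :: 'a::finite_field) \<in> Kset"
  unfolding Kset_def
proof (induction j)
  case 0 then show ?case by (simp add: power_0_left)
next
  case (Suc j)
  have "(of_nat (Suc j) :: 'a) ^ CHAR('a) = (1 + of_nat j) ^ CHAR('a)" by simp
  also have "\<dots> = 1 + of_nat j ^ CHAR('a)" by (simp add: frob_add)
  finally show ?case using Suc by simp
qed

lemma K_add: "c \<in> Kset \<Longrightarrow> d \<in> Kset \<Longrightarrow> (c::'a::finite_field) + d \<in> Kset"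
  unfolding Kset_def by (simp add: frob_add)
lemma K_diff: "c \<in> Kset \<Longrightarrow> d \<in> Kset \<Longrightarrow> (c::'a::finite_field) - d \<in> Kset"
  unfolding Kset_def by (simp add: frob_diff)
lemma K_mult: "c \<in> Kset \<Longrightarrow> d \<in> Kset \<Longrightarrow> (c::'a::finite_field) * d \<in> Kset"
  unfolding Kset_def by (simp add: power_mult_distrib)
lemma K_inv: "c \<in> Kset \<Longrightarrow> inverse (c::'a::finite_field) \<in> Kset"
  unfolding Kset_def by (simp add: power_inverse)
lemma K_0: "0 \<in> (Kset::'a::finite_field set)" using K_of_nat[of 0] by simp
lemma K_1: "1 \<in> (Kset::'a::finite_field set)" using K_of_nat[of 1] by simp

lemma K_card_le: "card (Kset::'a::finite_field set) \<le> CHAR('a)"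
proof -
  let ?P = "monom (1::'a) CHAR('a) + [:0, -1:]"
  have p2: "CHAR('a) \<ge> 2" using prime_ge_2_nat CHAR_prime by blast
  have dq: "degree [:0, -1::'a:] < degree (monom (1::'a) CHAR('a))"
    using p2 by (simp add: degree_monom_eq)
  have deg: "degree ?P = CHAR('a)"
    using degree_add_eq_left[OF dq] by (simp add: degree_monom_eq)
  have "?P \<noteq> 0" by (rule notI) (use deg p2 in simp)
  from card_poly_roots_bound[OF this] deg
  have "card {x. poly ?P x = 0} \<le> CHAR('a)" by simp
  moreover have "{x. poly ?P x = 0} = Kset"
    unfolding Kset_def by (auto simp: poly_monom)
  ultimately show ?thesis by simp
qed

lemma K_eq: "(Kset::'a::finite_field set) = of_nat ` {..<CHAR('a)}"
proof -
  have inj: "inj_on (of_nat :: nat \<Rightarrow> 'a) {..<CHAR('a)}"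
    by (auto simp: inj_on_def of_nat_eq_iff_cong_CHAR cong_def)
  have sub: "of_nat ` {..<CHAR('a)} \<subseteq> (Kset::'a set)" using K_of_nat by auto
  have "card (of_nat ` {..<CHAR('a)} :: 'a set) = CHAR('a)"
    using card_image[OF inj] by simp
  then show ?thesis using card_seteq[OF finite sub] K_card_le[where 'a='a]
    by simp
qed

lemma K_card: "card (Kset::'a::finite_field set) = CHAR('a)"
proof -
  have inj: "inj_on (of_nat :: nat \<Rightarrow> 'a) {..<CHAR('a)}"
    by (auto simp: inj_on_def of_nat_eq_iff_cong_CHAR cong_def)
  show ?thesis unfolding K_eq using card_image[OF inj] by simp
qed

definition closedK :: "'a::finite_field set \<Rightarrow> bool" where
  "closedK S \<longleftrightarrow> 0 \<in> S \<and> (\<forall>x\<in>S. \<forall>y\<in>S. x + y \<in> S) \<and> (\<forall>c\<in>Kset. \<forall>x\<in>S. c * x \<in> S)"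

lemma extend_closed:
  fixes S :: "'a::finite_field set"
  assumes cS: "closedK S" and x: "x \<notin> S"
  defines "S' \<equiv> (\<lambda>(s,c). s + c * x) ` (S \<times> Kset)"
  shows "closedK S'" "card S' = card S * CHAR('a)" "S \<subseteq> S'" "x \<in> S'"
proof -
  have S0: "0 \<in> S" and Sadd: "\<And>a b. a \<in> S \<Longrightarrow> b \<in> S \<Longrightarrow> a + b \<in> S"
    and Smul: "\<And>c a. c \<in> Kset \<Longrightarrow> a \<in> S \<Longrightarrow> c * a \<in> S"
    using cS unfolding closedK_def by auto
  show "S \<subseteq> S'"
  proof
    fix s assume "s \<in> S"
    then have "(s, 0) \<in> S \<times> Kset" using K_0 by auto
    then show "s \<in> S'" unfolding S'_def by force
  qed
  have "(0, 1) \<in> S \<times> Kset" using K_1 S0 by auto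
  then show "x \<in> S'" unfolding S'_def by force
  show "closedK S'"
    unfolding closedK_def
  proof (intro conjI ballI)
    show "0 \<in> S'" using \<open>S \<subseteq> S'\<close> S0 by auto
  next
    fix a b :: 'a assume "a \<in> S'" "b \<in> S'"
    then obtain s c t d where "s \<in> S" "c \<in> Kset" "t \<in> S" "d \<in> Kset" "a = s + c * x" "b = t + d * x"
      unfolding S'_def by auto
    then have "a + b = (s + t) + (c + d) * x" "(s+t, c+d) \<in> S \<times> Kset"
      using Sadd K_add by (auto simp: algebra_simps)
    then show "a + b \<in> S'" unfolding S'_def by force
  next
    fix e :: 'a and a assume "e \<in> Kset" "a \<in> S'"
    then obtain s c where "s \<in> S" "c \<in> Kset" "a = s + c * x"
      unfolding S'_def by auto
    then have "e * a = e * s + (e * c) * x" "(e * s, e * c) \<in> S \<times> Kset"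
      using Smul K_mult \<open>e \<in> Kset\<close> by (auto simp: algebra_simps)
    then show "e * a \<in> S'" unfolding S'_def by force
  qed
  have inj: "inj_on (\<lambda>(s,c). s + c * x) (S \<times> Kset)"
  proof (rule inj_onI, clarify)
    fix s c t d assume st: "s \<in> S" "c \<in> Kset" "t \<in> S" "d \<in> Kset" "s + c * x = t + d * x"
    show "s = t \<and> c = d"
    proof (cases "c = d")
      case True then show ?thesis using st by simp
    next
      case False
      have "(c - d) * x = t + (-1) * s" using st(5) by (simp add: algebra_simps)
      moreover have "(-1) * s \<in> S" using Smul[OF K_diff[OF K_0 K_1] st(1)] by simp
      then have "t + (-1) * s \<in> S" using Sadd[OF st(3)] by blast
      ultimately have "(c - d) * x \<in> S" by simp
      moreover have "inverse (c - d) \<in> Kset" using K_inv K_diff st(2,4) by blast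
      ultimately have "inverse (c - d) * ((c - d) * x) \<in> S"
        using Smul by blast
      moreover have "inverse (c - d) * ((c - d) * x) = x" using False by (simp add: mult.assoc[symmetric])
      ultimately have "x \<in> S" by simp
      then show ?thesis using x by simp
    qed
  qed
  show "card S' = card S * CHAR('a)"
    unfolding S'_def using card_image[OF inj] K_card[where 'a='a] by (simp add: card_cartesian_product)
qed

lemma card_pow_aux:
  "\<forall>S::'a::finite_field set. closedK S \<longrightarrow> (\<exists>d. card S = CHAR('a)^d) \<longrightarrow> CARD('a) - card S = m
     \<longrightarrow> (\<exists>e. CARD('a) = CHAR('a)^e)"
proof (induction m rule: less_induct)
  case (less m)
  show ?case
  proof (intro allI impI)
    fix S :: "'a set" assume cS: "closedK S" and d: "\<exists>d. card S = CHAR('a)^d" and m: "CARD('a) - card S = m"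
    show "\<exists>e. CARD('a) = CHAR('a)^e"
    proof (cases "S = UNIV")
      case True then show ?thesis using d by simp
    next
      case False
      then obtain x where x: "x \<notin> S" by auto
      define S' where "S' \<equiv> (\<lambda>(s,c). s + c * x) ` (S \<times> (Kset::'a set))"
      note E = extend_closed[OF cS x, folded S'_def]
      obtain d0 where d0: "card S = CHAR('a)^d0" using d by auto
      have c': "card S' = CHAR('a)^(Suc d0)" using E(2) d0 by simp
      have "card S < card S'" using E(3,4) x by (intro psubset_card_mono) auto
      moreover have "card S' \<le> CARD('a)" by (rule card_mono) auto
      ultimately have "CARD('a) - card S' < m" using m by linarith
      from less[OF this] E(1) c' show ?thesis by blast
    qed
  qed
qed

lemma card_is_char_pow: "\<exists>e. CARD('a::finite_field) = CHAR('a)^e"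
proof -
  have "closedK ({0}::'a set)" unfolding closedK_def by auto
  moreover have "card ({0}::'a set) = CHAR('a)^0" by simp
  ultimately show ?thesis using card_pow_aux[rule_format, of "{0::'a}"] by blast
qed

lemma card_field_degree: "CARD('a::finite_field) = CHAR('a) ^ field_degree TYPE('a)"
proof -
  obtain e where e: "CARD('a) = CHAR('a)^e" using card_is_char_pow by blast
  have p1: "CHAR('a) > 1" using prime_gt_1_nat CHAR_prime by blast
  have "CARD('a) = CHAR('a) ^ (THE n. CARD('a) = CHAR('a) ^ n)"
    by (rule theI[of _ e]) (use e p1 in \<open>auto simp: power_inject_exp\<close>)
  then show ?thesis unfolding field_degree_def .
qed

lemma pow_q: "(x::'a::finite_field) ^ (CHAR('a) ^ field_degree TYPE('a)) = x"
  using finite_field_power_card_eq_same[of x] card_field_degree[where 'a='a] by simp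

lemma tr_add: "abs_trace ((x::'a::finite_field) + y) = abs_trace x + abs_trace y"
  unfolding abs_trace_def by (simp add: frob_add' sum.distrib)

lemma K_pow: "c \<in> Kset \<Longrightarrow> (c::'a::finite_field) ^ (CHAR('a)^i) = c"
proof (induction i)
  case 0 then show ?case by simp
next
  case (Suc i)
  have "c ^ (CHAR('a)^Suc i) = (c ^ CHAR('a)) ^ (CHAR('a)^i)" by (simp add: power_mult)
  also have "\<dots> = c" using Suc by (simp add: Kset_def)
  finally show ?case .
qed

lemma tr_scale: "c \<in> Kset \<Longrightarrow> abs_trace ((c::'a::finite_field) * x) = c * abs_trace x"
  unfolding abs_trace_def by (simp add: power_mult_distrib K_pow sum_distrib_left)

lemma tr_frob: "abs_trace ((x::'a::finite_field) ^ CHAR('a)) = abs_trace x"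
proof -
  let ?n = "field_degree TYPE('a)"
  define f where "f i = x ^ (CHAR('a) ^ i)" for i
  have "abs_trace (x ^ CHAR('a)) = (\<Sum>i<?n. f (Suc i))"
    unfolding abs_trace_def f_def by (simp add: power_mult[symmetric] mult.commute)
  also have "\<dots> = (\<Sum>i<?n. f i) + f ?n - f 0"
    using sum.lessThan_Suc_shift[of f ?n] sum.lessThan_Suc[of f ?n] by (simp add: algebra_simps)
  also have "f ?n = f 0" unfolding f_def using pow_q[of x] by simp
  finally show ?thesis unfolding abs_trace_def f_def by simp
qed

lemma tr_in_K: "abs_trace (x::'a::finite_field) \<in> Kset"
proof -
  have "abs_trace x ^ CHAR('a) = (\<Sum>i<field_degree TYPE('a). (x ^ (CHAR('a) ^ i)) ^ CHAR('a))"
    unfolding abs_trace_def by (rule freshmans_dream_sum) auto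
  also have "\<dots> = abs_trace (x ^ CHAR('a))"
    unfolding abs_trace_def by (simp add: power_mult[symmetric] mult.commute)
  finally show ?thesis using tr_frob[of x] by (simp add: Kset_def)
qed

lemma tr_of_K: "c \<in> Kset \<Longrightarrow> abs_trace (c::'a::finite_field) = of_nat (field_degree TYPE('a)) * c"
  unfolding abs_trace_def by (simp add: K_pow)

lemma trace_nat_prop: "of_nat (trace_nat y) = abs_trace (y::'a::finite_field) \<and> trace_nat y < CHAR('a)"
proof -
  obtain k where k: "k < CHAR('a)" "abs_trace y = of_nat k" using tr_in_K[of y] K_eq by auto
  show ?thesis unfolding trace_nat_def
  proof (rule theI2[of _ k])
    show "k < CHAR('a) \<and> of_nat k = abs_trace y" using k by simp
  next
    fix j assume "j < CHAR('a) \<and> (of_nat j::'a) = abs_trace y"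
    then show "j = k" using k by (auto simp: of_nat_eq_iff_cong_CHAR cong_def)
  next
    fix j assume "j < CHAR('a) \<and> (of_nat j::'a) = abs_trace y"
    then show "of_nat j = abs_trace y \<and> j < CHAR('a)" by simp
  qed
qed

lemma trace_nat_eq: "j < CHAR('a) \<Longrightarrow> trace_nat (y::'a::finite_field) = j \<longleftrightarrow> abs_trace y = of_nat j"
  using trace_nat_prop[of y] by (auto simp: of_nat_eq_iff_cong_CHAR cong_def)

definition zeta :: "'a::finite_field itself \<Rightarrow> complex" where
  "zeta _ = exp (2 * of_real pi * \<i> / of_nat CHAR('a))"

lemma can_char_zeta: "can_char (y::'a::finite_field) = zeta TYPE('a) ^ trace_nat y"
proof -
  have "2 * of_real pi * \<i> * of_nat (trace_nat y) / of_nat CHAR('a)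
        = of_nat (trace_nat y) * (2 * of_real pi * \<i> / of_nat CHAR('a))" by simp
  then show ?thesis unfolding can_char_def zeta_def by (simp only: exp_of_nat_mult)
qed

lemma zeta_pow: "zeta TYPE('a::finite_field) ^ CHAR('a) = 1"
proof -
  have "zeta TYPE('a) ^ CHAR('a) = exp (of_nat CHAR('a) * (2 * of_real pi * \<i> / of_nat CHAR('a)))"
    unfolding zeta_def by (simp only: exp_of_nat_mult)
  also have "\<dots> = exp (2 * of_real pi * \<i>)" by simp
  finally show ?thesis by simp
qed

lemma zeta_neq1: "zeta TYPE('a::finite_field) \<noteq> 1"
proof
  assume "zeta TYPE('a) = 1"
  then obtain m :: int where m: "Im (2 * of_real pi * \<i> / of_nat CHAR('a)) = of_int (2 * m) * pi"
    unfolding zeta_def exp_eq_1 by blast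
  have p2: "CHAR('a) \<ge> 2" using prime_ge_2_nat CHAR_prime by blast
  have "Im (2 * of_real pi * \<i> / of_nat CHAR('a)) = 2 * pi / real CHAR('a)"
    by (simp add: Im_divide_of_nat)
  with m have "2 * pi / real CHAR('a) = 2 * real_of_int m * pi" by simp
  then have e: "1 / real CHAR('a) = real_of_int m" using pi_gt_zero
    by (simp add: field_simps)
  have "0 < 1 / real CHAR('a)" "1 / real CHAR('a) < 1" using p2 by auto
  with e have "0 < real_of_int m" "real_of_int m < 1" by simp_all
  then have "0 < m" "m < 1" by linarith+
  then show False by linarith
qed

lemma sum_zeta: "(\<Sum>j<CHAR('a::finite_field). zeta TYPE('a) ^ j) = 0"
  using sum_gp_strict[of "zeta TYPE('a)" "CHAR('a)"] zeta_pow[where 'a='a] zeta_neq1[where 'a='a] by simp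

lemma fourier_integral_aux:
  fixes g :: "'a::finite_field \<Rightarrow> 'a"
  assumes hg: "\<And>c x. c \<in> Kset \<Longrightarrow> c \<noteq> 0 \<Longrightarrow> g (c * x) = c * g x"
  shows "(\<Sum>x\<in>UNIV. can_char (g x)) =
     of_int (int (card {x. abs_trace (g x) = 0}) - int (card {x. abs_trace (g x) = 1}))"
proof -
  let ?p = "CHAR('a)"
  let ?z = "zeta TYPE('a)"
  define N where "N j = card {x. abs_trace (g x) = (of_nat j::'a)}" for j
  have Nj: "N j = N 1" if j: "0 < j" "j < ?p" for j
  proof -
    define c where "c = (of_nat j :: 'a)"
    have cK: "c \<in> Kset" unfolding c_def by (rule K_of_nat)
    have c0: "c \<noteq> 0" unfolding c_def using j by (auto simp: of_nat_eq_0_iff_char_dvd dest: dvd_imp_le)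
    have "{x. abs_trace (g x) = c} = (\<lambda>x. c * x) ` {x. abs_trace (g x) = 1}"
    proof (intro equalityI subsetI)
      fix y assume y: "y \<in> {x. abs_trace (g x) = c}"
      have "abs_trace (g (inverse c * y)) = inverse c * abs_trace (g y)"
        using hg[OF K_inv[OF cK]] c0 tr_scale[OF K_inv[OF cK]] by simp
      also have "\<dots> = 1" using y c0 by simp
      finally have "inverse c * y \<in> {x. abs_trace (g x) = 1}" by simp
      moreover have "y = c * (inverse c * y)" using c0 by (simp add: mult.assoc[symmetric])
      ultimately show "y \<in> (\<lambda>x. c * x) ` {x. abs_trace (g x) = 1}" by blast
    next
      fix y assume "y \<in> (\<lambda>x. c * x) ` {x. abs_trace (g x) = 1}"
      then obtain x where "y = c * x" "abs_trace (g x) = 1" by auto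
      then show "y \<in> {x. abs_trace (g x) = c}" using hg[OF cK c0] tr_scale[OF cK] by simp
    qed
    moreover have "inj_on (\<lambda>x. c * x) {x. abs_trace (g x) = 1}" using c0 by (auto simp: inj_on_def)
    ultimately show ?thesis unfolding N_def c_def[symmetric] by (simp add: card_image)
  qed
  have "(\<Sum>x\<in>UNIV. can_char (g x)) = (\<Sum>x\<in>UNIV. ?z ^ trace_nat (g x))"
    by (simp add: can_char_zeta)
  also have "\<dots> = (\<Sum>j<?p. \<Sum>x\<in>{x\<in>UNIV. trace_nat (g x) = j}. ?z ^ trace_nat (g x))"
    by (rule sum.group[symmetric]) (use trace_nat_prop in auto)
  also have "\<dots> = (\<Sum>j<?p. of_nat (N j) * ?z ^ j)"
  proof (rule sum.cong[OF refl])
    fix j assume "j \<in> {..<?p}"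
    then have se: "{x\<in>UNIV. trace_nat (g x) = j} = {x. abs_trace (g x) = of_nat j}"
      using trace_nat_eq by auto
    have "(\<Sum>x\<in>{x\<in>UNIV. trace_nat (g x) = j}. ?z ^ trace_nat (g x)) = (\<Sum>x\<in>{x\<in>UNIV. trace_nat (g x) = j}. ?z ^ j)"
      by (rule sum.cong) simp_all
    then show "(\<Sum>x\<in>{x\<in>UNIV. trace_nat (g x) = j}. ?z ^ trace_nat (g x)) = of_nat (N j) * ?z ^ j"
      unfolding N_def se by simp
  qed
  also have "\<dots> = of_nat (N 0) + (\<Sum>j<?p - 1. of_nat (N (Suc j)) * ?z ^ Suc j)"
    using sum.lessThan_Suc_shift[of "\<lambda>j. of_nat (N j) * ?z ^ j" "?p - 1"] by simp
  also have "(\<Sum>j<?p - 1. of_nat (N (Suc j)) * ?z ^ Suc j) = (\<Sum>j<?p - 1. of_nat (N 1) * ?z ^ Suc j)"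
  proof (rule sum.cong[OF refl])
    fix j assume "j \<in> {..<?p - 1}"
    then have "Suc j < ?p" by simp
    then show "of_nat (N (Suc j)) * ?z ^ Suc j = of_nat (N 1) * ?z ^ Suc j" using Nj[of "Suc j"] by simp
  qed
  also have "\<dots> = of_nat (N 1) * (\<Sum>j<?p - 1. ?z ^ Suc j)" by (simp add: sum_distrib_left)
  also have "(\<Sum>j<?p - 1. ?z ^ Suc j) = -1"
  proof -
    have "(\<Sum>j<?p. ?z ^ j) = 1 + (\<Sum>j<?p - 1. ?z ^ Suc j)"
      using sum.lessThan_Suc_shift[of "\<lambda>j. ?z ^ j" "?p - 1"] by simp
    then show ?thesis using sum_zeta[where 'a='a] by (simp add: add_eq_0_iff)
  qed
  finally show ?thesis unfolding N_def by simp
qed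

lemma funpow_in: "(\<And>x. x \<in> B \<Longrightarrow> f x \<in> B) \<Longrightarrow> x \<in> B \<Longrightarrow> (f ^^ i) x \<in> B"
  by (induction i) auto

lemma funpow_fix: "f y = y \<Longrightarrow> (f ^^ i) y = y"
  by (induction i) auto

lemma funpow_add_app: "(f ^^ (a + b)) x = (f ^^ a) ((f ^^ b) x)"
  by (simp add: funpow_add)

lemma funpow_mult_fix: "(f ^^ d) x = x \<Longrightarrow> (f ^^ (d * u)) x = x"
proof -
  assume "(f ^^ d) x = x"
  then have "((f ^^ d) ^^ u) x = x" by (rule funpow_fix)
  then show ?thesis by (simp add: funpow_mult)
qed

lemma funpow_mod: "(f ^^ l) x = x \<Longrightarrow> (f ^^ m) x = (f ^^ (m mod l)) x"
proof -
  assume h: "(f ^^ l) x = x"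
  have "(f ^^ m) x = (f ^^ (m mod l + l * (m div l))) x" by simp
  also have "\<dots> = (f ^^ (m mod l)) ((f ^^ (l * (m div l))) x)" by (rule funpow_add_app)
  also have "(f ^^ (l * (m div l))) x = x" using funpow_mult_fix[OF h] .
  finally show ?thesis .
qed

lemma orbit_prime:
  fixes \<phi> :: "'a \<Rightarrow> 'a"
  assumes l: "prime l" and fin: "finite B" and mapB: "\<And>x. x \<in> B \<Longrightarrow> \<phi> x \<in> B"
    and per: "\<And>x. x \<in> B \<Longrightarrow> (\<phi> ^^ l) x = x"
  shows "card B mod l = card {x\<in>B. \<phi> x = x} mod l"
proof -
  define C where "C = {x\<in>B. \<phi> x \<noteq> x}"
  define orb where "orb x = (\<lambda>i. (\<phi> ^^ i) x) ` {..<l}" for x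
  have l1: "l > 1" using l prime_gt_1_nat by blast
  have inB: "(\<phi> ^^ i) x \<in> B" if "x \<in> B" for x i using funpow_in[of B \<phi>, OF mapB that] .
  have modx: "(\<phi> ^^ m) x = (\<phi> ^^ (m mod l)) x" if "x \<in> B" for x m using funpow_mod[OF per[OF that]] .
  have inj: "inj_on (\<lambda>i. (\<phi> ^^ i) x) {..<l}" if x: "x \<in> C" for x
  proof -
    have xB: "x \<in> B" and nf: "\<phi> x \<noteq> x" using x unfolding C_def by auto
    have "i = j" if ij: "i < l" "j < l" "i \<le> j" "(\<phi> ^^ i) x = (\<phi> ^^ j) x" for i j
    proof (rule ccontr)
      assume "i \<noteq> j"
      with ij have d: "0 < j - i" "j - i < l" by auto
      have "x = (\<phi> ^^ (l - i + i)) x" using per[OF xB] ij by simp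
      also have "\<dots> = (\<phi> ^^ (l - i)) ((\<phi> ^^ j) x)" using ij(4) by (simp only: funpow_add_app)
      also have "\<dots> = (\<phi> ^^ (l - i + j)) x" by (simp only: funpow_add_app)
      also have "\<dots> = (\<phi> ^^ ((l - i + j) mod l)) x" by (rule modx[OF xB])
      also have "(l - i + j) mod l = j - i"
      proof -
        have e: "l - i + j = (j - i) + l" using ij by simp
        show ?thesis by (simp only: e mod_add_self2) (simp add: d)
      qed
      finally have fx: "(\<phi> ^^ (j - i)) x = x" by simp
      have "\<not> l dvd (j - i)" using d by (auto dest: dvd_imp_le)
      then have "coprime l (j - i)" by (rule prime_imp_coprime[OF l])
      then have "coprime (j - i) l" by (simp add: coprime_commute)
      then obtain u where u: "[(j - i) * u = Suc 0] (mod l)" using cong_solve_coprime_nat by blast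
      have "x = (\<phi> ^^ ((j - i) * u)) x" using funpow_mult_fix[OF fx] by simp
      also have "\<dots> = (\<phi> ^^ (((j - i) * u) mod l)) x" by (rule modx[OF xB])
      also have "((j - i) * u) mod l = 1" using u l1 by (simp add: cong_def)
      finally show False using nf by simp
    qed
    note H = this
    show ?thesis
    proof (rule inj_onI)
      fix i j assume ij: "i \<in> {..<l}" "j \<in> {..<l}" "(\<phi> ^^ i) x = (\<phi> ^^ j) x"
      show "i = j"
      proof (cases "i \<le> j")
        case True then show ?thesis using H[of i j] ij by simp
      next
        case False then show ?thesis using H[of j i] ij by simp
      qed
    qed
  qed
  have card_orb: "card (orb x) = l" if "x \<in> C" for x
    unfolding orb_def using card_image[OF inj[OF that]] by simp
  have orbC: "orb x \<subseteq> C" if x: "x \<in> C" for x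
  proof
    fix y assume "y \<in> orb x"
    then obtain i where i: "i < l" "y = (\<phi> ^^ i) x" unfolding orb_def by auto
    have xB: "x \<in> B" and nf: "\<phi> x \<noteq> x" using x unfolding C_def by auto
    have "\<phi> y \<noteq> y"
    proof
      assume "\<phi> y = y"
      then have "(\<phi> ^^ (l - i)) y = y" by (rule funpow_fix)
      moreover have "(\<phi> ^^ (l - i)) y = x" using i per[OF xB] funpow_add_app[where f=\<phi> and a="l-i" and b=i and x=x] by simp
      ultimately have "y = x" by simp
      with \<open>\<phi> y = y\<close> nf show False by simp
    qed
    then show "y \<in> C" using inB[OF xB] i unfolding C_def by auto
  qed
  have orb_eq: "orb y = orb x" if x: "x \<in> C" and y: "y \<in> orb x" for x y
  proof -
    obtain i where i: "i < l" "y = (\<phi> ^^ i) x" using y unfolding orb_def by auto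
    have xB: "x \<in> B" using x unfolding C_def by auto
    have "orb y \<subseteq> orb x"
    proof
      fix z assume "z \<in> orb y"
      then obtain j where j: "j < l" "z = (\<phi> ^^ j) y" unfolding orb_def by auto
      have "z = (\<phi> ^^ (j + i)) x" using j(2) i(2) funpow_add_app[where f=\<phi> and a=j and b=i and x=x] by simp
      also have "\<dots> = (\<phi> ^^ ((j + i) mod l)) x" by (rule modx[OF xB])
      finally show "z \<in> orb x" unfolding orb_def using l1 by auto
    qed
    moreover have "y \<in> C" using orbC[OF x] y by auto
    ultimately show ?thesis using card_orb x card_subset_eq[of "orb x" "orb y"]
      unfolding orb_def by auto
  qed
  have self: "x \<in> orb x" for x
  proof -
    have "(\<phi> ^^ 0) x \<in> orb x" unfolding orb_def using l1 by (intro imageI) auto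
    then show ?thesis by simp
  qed
  have Cun: "C = \<Union> (orb ` C)" using orbC self by blast
  have disj: "pairwise disjnt (orb ` C)"
  proof (rule pairwiseI)
    fix O1 O2 assume "O1 \<in> orb ` C" "O2 \<in> orb ` C" "O1 \<noteq> O2"
    then obtain x y where "x \<in> C" "y \<in> C" "O1 = orb x" "O2 = orb y" "orb x \<noteq> orb y" by auto
    then show "disjnt O1 O2" unfolding disjnt_def using orb_eq by blast
  qed
  have finC: "finite C" using fin unfolding C_def by auto
  have "card (\<Union> (orb ` C)) = sum card (orb ` C)"
    by (rule card_Union_disjoint[OF disj]) (auto simp: orb_def)
  then have "card C = sum card (orb ` C)" using Cun by simp
  also have "\<dots> = sum (\<lambda>_. l) (orb ` C)" using card_orb by (intro sum.cong) auto
  also have "\<dots> = l * card (orb ` C)" by simp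
  finally have dC: "l dvd card C" by simp
  have Bu: "B = C \<union> {x\<in>B. \<phi> x = x}" unfolding C_def by auto
  have "card (C \<union> {x\<in>B. \<phi> x = x}) = card C + card {x\<in>B. \<phi> x = x}"
    by (rule card_Un_disjoint) (use finC fin in \<open>auto simp: C_def\<close>)
  then have "card B = card C + card {x\<in>B. \<phi> x = x}" using Bu by simp
  then show ?thesis using dC by (auto elim!: dvdE)
qed

lemma orbit_ppow:
  fixes \<phi> :: "'a \<Rightarrow> 'a"
  assumes l: "prime l" and fin: "finite A" and mapA: "\<And>x. x \<in> A \<Longrightarrow> \<phi> x \<in> A"
    and per: "\<And>x. x \<in> A \<Longrightarrow> (\<phi> ^^ (l ^ k)) x = x"
  shows "card A mod l = card {x\<in>A. \<phi> x = x} mod l"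
  using mapA per
proof (induction k arbitrary: \<phi>)
  case 0
  then have "{x\<in>A. \<phi> x = x} = A" by auto
  then show ?case by simp
next
  case (Suc k)
  define B where "B = {x\<in>A. (\<phi> ^^ l) x = x}"
  have "card A mod l = card {x\<in>A. (\<phi> ^^ l) x = x} mod l"
  proof (rule Suc.IH)
    fix x assume "x \<in> A" then show "(\<phi> ^^ l) x \<in> A" using funpow_in[of A \<phi>] Suc.prems(1) by blast
  next
    fix x assume "x \<in> A"
    then show "((\<phi> ^^ l) ^^ (l ^ k)) x = x" using Suc.prems(2) by (simp add: funpow_mult)
  qed
  also have "card {x\<in>A. (\<phi> ^^ l) x = x} mod l = card {x\<in>B. \<phi> x = x} mod l"
    unfolding B_def[symmetric]
  proof (rule orbit_prime[OF l])
    show "finite B" using fin unfolding B_def by auto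
  next
    fix x assume "x \<in> B"
    then have xA: "x \<in> A" and fx: "(\<phi> ^^ l) x = x" unfolding B_def by auto
    have "(\<phi> ^^ l) (\<phi> x) = \<phi> x" using funpow_swap1[where f=\<phi> and n=l and x=x] fx by simp
    then show "\<phi> x \<in> B" using Suc.prems(1)[OF xA] unfolding B_def by simp
  next
    fix x assume "x \<in> B" then show "(\<phi> ^^ l) x = x" unfolding B_def by auto
  qed
  also have "{x\<in>B. \<phi> x = x} = {x\<in>A. \<phi> x = x}"
  proof (intro equalityI subsetI)
    fix x assume "x \<in> {x\<in>A. \<phi> x = x}"
    then show "x \<in> {x\<in>B. \<phi> x = x}" unfolding B_def using funpow_fix[of \<phi> x l] by simp
  qed (auto simp: B_def)
  finally show ?case .
qed

lemma frob_iter: "((\<lambda>x::'b::monoid_mult. x ^ p) ^^ i) x = x ^ (p ^ i)"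
proof (induction i)
  case (Suc i)
  have "(x ^ (p ^ i)) ^ p = (x ^ p) ^ (p ^ i)" by (metis power_mult mult.commute)
  moreover have "x ^ (p * p ^ i) = (x ^ p) ^ (p ^ i)" by (rule power_mult)
  ultimately show ?case using Suc by simp
qed simp

theorem mainTheorem4:
  fixes s k l :: nat
  assumes "CARD('a::finite_field) > 2"
    and "coprime s (CARD('a) - 1)"
    and "[s = 1] (mod (CHAR('a) - 1))"
    and "prime l"
    and "field_degree TYPE('a) = l ^ k"
    and "\<not> [CHAR('a) = 2] (mod l)"
  shows "\<exists>m::int. frakD (\<lambda>x::'a. x ^ s) = of_int (int l * m)"
proof -
  let ?p = "CHAR('a)"
  let ?n = "field_degree TYPE('a)"
  have lp: "prime l" by fact
  have p2: "?p \<ge> 2" using prime_ge_2_nat CHAR_prime by blast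
  have pn2: "?p \<noteq> 2" using assms(6) by auto
  have p3: "?p \<ge> 3" using p2 pn2 by linarith
  have smod: "s mod (?p - 1) = 1" using assms(3) p3 by (simp add: cong_def)
  have sdec: "s = 1 + (?p - 1) * (s div (?p - 1))" using smod by (metis add.commute div_mult_mod_eq mult.commute)
  have pow_s: "c ^ s = c" if c: "c \<in> Kset" for c :: 'a
  proof (cases "c = 0")
    case True then show ?thesis using sdec by (simp add: power_0_left)
  next
    case False
    have "c * c ^ (?p - 1) = c ^ ?p" using p2 by (simp add: power_Suc[symmetric])
    also have "\<dots> = c" using c by (simp add: Kset_def)
    finally have "c ^ (?p - 1) = 1" using False by simp
    then have "c ^ s = c * (c ^ (?p - 1)) ^ (s div (?p - 1))"
      by (subst sdec) (simp add: power_add power_mult)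
    then show ?thesis using \<open>c ^ (?p - 1) = 1\<close> by simp
  qed
  define w where "w a = int (card {x. abs_trace (a * x + x ^ s) = (0::'a)}) - int (card {x. abs_trace (a * x + x ^ s) = (1::'a)})" for a :: 'a
  have W: "fourier_coeff (\<lambda>x::'a. x ^ s) a = of_int (w a)" for a :: 'a
  proof -
    have "(\<Sum>x\<in>UNIV. can_char (a * x + x ^ s)) = of_int (w a)"
      unfolding w_def
    proof (rule fourier_integral_aux)
      fix c x :: 'a assume "c \<in> Kset" "c \<noteq> 0"
      then show "a * (c * x) + (c * x) ^ s = c * (a * x + x ^ s)"
        using pow_s by (simp add: power_mult_distrib algebra_simps)
    qed
    then show ?thesis unfolding fourier_coeff_def .
  qed
  have cardmod: "card {x::'a. abs_trace (x + x ^ s) = c} mod l = card {x\<in>{x::'a. abs_trace (x + x ^ s) = c}. x ^ ?p = x} mod l" for c :: 'a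
  proof (rule orbit_ppow[OF lp])
    fix x :: 'a assume "x \<in> {x. abs_trace (x + x ^ s) = c}"
    moreover have "abs_trace (x ^ ?p + (x ^ ?p) ^ s) = abs_trace (x + x ^ s)"
    proof -
      have "x ^ ?p + (x ^ ?p) ^ s = (x + x ^ s) ^ ?p"
        by (simp add: frob_add power_mult[symmetric] mult.commute)
      then show ?thesis using tr_frob by simp
    qed
    ultimately show "x ^ ?p \<in> {x. abs_trace (x + x ^ s) = c}" by simp
  next
    fix x :: 'a
    show "((\<lambda>x. x ^ ?p) ^^ l ^ k) x = x" using pow_q[of x] assms(5) by (simp add: frob_iter)
  qed simp
  define e where "e = (of_nat ?n :: 'a) * 2"
  have Fset: "{x\<in>{x::'a. abs_trace (x + x ^ s) = c}. x ^ ?p = x} = {x\<in>Kset. e * x = c}" for c :: 'a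
  proof -
    have "abs_trace (x + x ^ s) = e * x" if "x \<in> Kset" for x :: 'a
      using that pow_s[OF that] tr_of_K[OF K_add[OF that that]] unfolding e_def by (simp add: algebra_simps)
    then show ?thesis unfolding Kset_def by auto
  qed
  have eK: "e \<in> Kset" unfolding e_def using K_of_nat[of "?n * 2"] by simp
  have dvd1: "int l dvd w 1"
  proof -
    have "card {x\<in>Kset. e * x = (0::'a)} mod l = card {x\<in>Kset. e * x = (1::'a)} mod l"
    proof (cases "e = 0")
      case False
      have H: "{x\<in>Kset. e * x = c} = {c / e}" if "c \<in> Kset" for c
      proof -
        have "c / e \<in> Kset" using K_mult[OF that K_inv[OF eK]] by (simp add: divide_inverse)
        then show ?thesis using False by (auto simp: field_simps)
      qed
      have A0: "{x\<in>Kset. e * x = (0::'a)} = {0 / e}" by (rule H[OF K_0])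
      have A1: "{x\<in>Kset. e * x = (1::'a)} = {1 / e}" by (rule H[OF K_1])
      show ?thesis by (simp only: A0 A1) simp
    next
      case True
      then have "?p dvd ?n * 2" unfolding e_def by (metis of_nat_eq_0_iff_char_dvd of_nat_mult of_nat_numeral)
      moreover have "\<not> ?p dvd 2" using pn2 p2 by (auto dest: dvd_imp_le)
      ultimately have "?p dvd ?n" using CHAR_prime prime_dvd_mult_iff by blast
      then have "?p dvd l" using assms(5) CHAR_prime prime_dvd_power by metis
      then have pl: "?p = l" using lp CHAR_prime by (simp add: primes_dvd_imp_eq)
      have B0: "{x\<in>Kset. e * x = (0::'a)} = Kset" using True by auto
      have B1: "{x\<in>Kset. e * x = (1::'a)} = {}" using True by auto
      show ?thesis by (simp only: B0 B1) (simp add: K_card pl)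
    qed
    then have "card {x::'a. abs_trace (x + x ^ s) = 0} mod l = card {x::'a. abs_trace (x + x ^ s) = 1} mod l"
      using cardmod[of 0] cardmod[of 1] Fset[of 0] Fset[of 1] by simp
    then have "int (card {x::'a. abs_trace (x + x ^ s) = 0}) mod int l = int (card {x::'a. abs_trace (x + x ^ s) = 1}) mod int l"
      by (metis of_nat_mod)
    then show ?thesis unfolding w_def by (simp add: mod_eq_dvd_iff)
  qed
  then obtain t where t: "w 1 = int l * t" by (auto elim: dvdE)
  have "frakD (\<lambda>x::'a. x ^ s) = (\<Prod>a\<in>UNIV - {0}. of_int (w a))"
    unfolding frakD_def by (simp add: W)
  also have "\<dots> = of_int (\<Prod>a\<in>UNIV - {0}. w a)" by simp
  also have "(\<Prod>a\<in>UNIV - {0::'a}. w a) = w 1 * (\<Prod>a\<in>UNIV - {0} - {1}. w a)"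
    by (rule prod.remove) auto
  finally show ?thesis using t by (metis mult.assoc)
qed

end
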